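(* Let $\omega$ be a rectilinearly-convex obstacle. Then there exists a minimum skeleton $S^*$ for $\omega$ such that each edge of $S^*$ is a maximum length visibility edge of $\omega$.
   Context: An obstacle $\omega$ is a simple polygon in $\mathbb{R}^2$ (a closed, bounded polygonal region without holes whose boundary does not intersect itself), assumed in general position (no three of its vertices are collinear). $\omega$ is rectilinear if each boundary edge is horizontal or vertical, and a rectilinear obstacle is rectilinearly-convex if any two points of $\omega$ can be joined by a shortest rectilinear path (made of horizontal and vertical segments, of minimum $\ell_1$ length) contained in $\omega$. A corner point of a rectilinear path is a point where a horizontal and a vertical segment of the path meet. A set $S$ of closed line segments is inside $\omega$ if the union of its elements is contained in $\omega$. Such an $S$ is a skeleton for $\omega$ if for every pair of points $p,q$ not in the interior of $\omega$ such that every shortest rectilinear path between $p$ and $q$ with at most one corner point meets the interior of $\omega$, each such path intersects some element of $S$. A minimum skeleton is a skeleton with the smallest possible number of segments. A visibility edge is a line segment contained in $\omega$; it is a maximum length visibility edge if it cannot be extended at either end while remaining contained in $\omega$ (i.e. it extends as far as possible in both directions to the boundary of $\omega$). *)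

theory Defs
  imports "HOL-Analysis.Analysis"
begin

type_synonym pt = "real \<times> real"

definition poly_edge :: "pt list \<Rightarrow> nat \<Rightarrow> pt set" where
  "poly_edge vs i = closed_segment (vs ! i) (vs ! ((i + 1) mod length vs))"

definition poly_boundary :: "pt list \<Rightarrow> pt set" where
  "poly_boundary vs = (\<Union>i<length vs. poly_edge vs i)"

definition simple_polygon :: "pt list \<Rightarrow> bool" where
  "simple_polygon vs \<longleftrightarrow> length vs \<ge> 3 \<and> distinct vs \<and>
     (\<forall>i<length vs. \<forall>j<length vs. i \<noteq> j \<longrightarrow>
        (if j = (i + 1) mod length vs then poly_edge vs i \<inter> poly_edge vs j = {vs ! j}
         else if i = (j + 1) mod length vs then poly_edge vs i \<inter> poly_edge vs j = {vs ! i}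
         else poly_edge vs i \<inter> poly_edge vs j = {}))"

definition general_position :: "pt list \<Rightarrow> bool" where
  "general_position vs \<longleftrightarrow>
     (\<forall>i<length vs. \<forall>j<length vs. \<forall>k<length vs.
        i \<noteq> j \<and> j \<noteq> k \<and> i \<noteq> k \<longrightarrow> \<not> collinear {vs ! i, vs ! j, vs ! k})"

definition poly_region :: "pt list \<Rightarrow> pt set" where
  "poly_region vs = poly_boundary vs \<union> inside (poly_boundary vs)"

definition obstacle :: "pt list \<Rightarrow> bool" where
  "obstacle vs \<longleftrightarrow> simple_polygon vs \<and> general_position vs"

definition rectilinear_polygon :: "pt list \<Rightarrow> bool" where
  "rectilinear_polygon vs \<longleftrightarrow>
     (\<forall>i<length vs. fst (vs ! i) = fst (vs ! ((i + 1) mod length vs)) \<or>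
                    snd (vs ! i) = snd (vs ! ((i + 1) mod length vs)))"

definition rect_path :: "pt list \<Rightarrow> bool" where
  "rect_path ps \<longleftrightarrow> ps \<noteq> [] \<and>
     (\<forall>i. i + 1 < length ps \<longrightarrow> ps ! i \<noteq> ps ! (i + 1) \<and>
        (fst (ps ! i) = fst (ps ! (i + 1)) \<or> snd (ps ! i) = snd (ps ! (i + 1))))"

definition l1_dist :: "pt \<Rightarrow> pt \<Rightarrow> real" where
  "l1_dist p q = \<bar>fst p - fst q\<bar> + \<bar>snd p - snd q\<bar>"

definition rect_length :: "pt list \<Rightarrow> real" where
  "rect_length ps = (\<Sum>i<length ps - 1. l1_dist (ps ! i) (ps ! (i + 1)))"

definition path_points :: "pt list \<Rightarrow> pt set" where
  "path_points ps = set ps \<union> (\<Union>i<length ps - 1. closed_segment (ps ! i) (ps ! (i + 1)))"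

definition rect_path_between :: "pt list \<Rightarrow> pt \<Rightarrow> pt \<Rightarrow> bool" where
  "rect_path_between ps p q \<longleftrightarrow> rect_path ps \<and> hd ps = p \<and> last ps = q"

definition shortest_rect_path :: "pt list \<Rightarrow> pt \<Rightarrow> pt \<Rightarrow> bool" where
  "shortest_rect_path ps p q \<longleftrightarrow> rect_path_between ps p q \<and>
     (\<forall>qs. rect_path_between qs p q \<longrightarrow> rect_length ps \<le> rect_length qs)"

text \<open>Segment i (from ps!i to ps!(i+1)) is horizontal iff the y-coordinates agree
  (consecutive points are distinct, so each segment is exactly one of horizontal/vertical).\<close>
definition seg_horizontal :: "pt list \<Rightarrow> nat \<Rightarrow> bool" where
  "seg_horizontal ps i \<longleftrightarrow> snd (ps ! i) = snd (ps ! (i + 1))"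

definition corner_points :: "pt list \<Rightarrow> pt set" where
  "corner_points ps = {ps ! i | i. 0 < i \<and> i + 1 < length ps \<and>
       seg_horizontal ps (i - 1) \<noteq> seg_horizontal ps i}"

definition rectilinearly_convex :: "pt set \<Rightarrow> bool" where
  "rectilinearly_convex \<omega> \<longleftrightarrow>
     (\<forall>p\<in>\<omega>. \<forall>q\<in>\<omega>. \<exists>ps. shortest_rect_path ps p q \<and> path_points ps \<subseteq> \<omega>)"

definition is_segment :: "pt set \<Rightarrow> bool" where
  "is_segment s \<longleftrightarrow> (\<exists>a b. a \<noteq> b \<and> s = closed_segment a b)"

definition skeleton :: "pt set \<Rightarrow> pt set set \<Rightarrow> bool" where
  "skeleton \<omega> S \<longleftrightarrow>
     (\<forall>s\<in>S. is_segment s) \<and> \<Union>S \<subseteq> \<omega> \<and>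
     (\<forall>p q. p \<notin> interior \<omega> \<and> q \<notin> interior \<omega> \<and>
        (\<forall>ps. shortest_rect_path ps p q \<and> card (corner_points ps) \<le> 1 \<longrightarrow>
              path_points ps \<inter> interior \<omega> \<noteq> {}) \<longrightarrow>
        (\<forall>ps. shortest_rect_path ps p q \<and> card (corner_points ps) \<le> 1 \<longrightarrow>
              (\<exists>s\<in>S. path_points ps \<inter> s \<noteq> {})))"

definition minimum_skeleton :: "pt set \<Rightarrow> pt set set \<Rightarrow> bool" where
  "minimum_skeleton \<omega> S \<longleftrightarrow> finite S \<and> skeleton \<omega> S \<and>
     (\<forall>T. finite T \<and> skeleton \<omega> T \<longrightarrow> card S \<le> card T)"

text \<open>Maximum length visibility edge: a segment contained in the obstacle that
  cannot be extended (is not properly contained in a larger segment inside it).\<close>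
definition max_visibility_edge :: "pt set \<Rightarrow> pt set \<Rightarrow> bool" where
  "max_visibility_edge \<omega> s \<longleftrightarrow> is_segment s \<and> s \<subseteq> \<omega> \<and>
     (\<forall>c d. s \<subseteq> closed_segment c d \<and> closed_segment c d \<subseteq> \<omega> \<longrightarrow> closed_segment c d = s)"

end

theory Submission imports Defs begin

lemma seg_sub_eq:
  fixes c d c' d' :: "real \<times> real"
  assumes "c \<in> closed_segment c' d'" "d \<in> closed_segment c' d'" "dist c' d' \<le> dist c d"
  shows "closed_segment c d = closed_segment c' d'"
proof -
  obtain u where u: "0 \<le> u" "u \<le> 1" "c = (1 - u) *\<^sub>R c' + u *\<^sub>R d'"
    using assms(1) by (auto simp: in_segment)
  obtain v where v: "0 \<le> v" "v \<le> 1" "d = (1 - v) *\<^sub>R c' + v *\<^sub>R d'"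
    using assms(2) by (auto simp: in_segment)
  show ?thesis
  proof (cases "c' = d'")
    case True
    then show ?thesis using u v by (simp add: algebra_simps)
  next
    case False
    have "d - c = (v - u) *\<^sub>R (d' - c')" unfolding u(3) v(3) by (simp add: algebra_simps)
    then have "dist c d = \<bar>v - u\<bar> * dist c' d'"
      by (metis dist_commute dist_norm norm_scaleR)
    with assms(3) False have "1 \<le> \<bar>v - u\<bar>" by simp
    then have "(u = 0 \<and> v = 1) \<or> (u = 1 \<and> v = 0)" using u v by linarith
    then show ?thesis using u v by (auto simp: closed_segment_commute)
  qed
qed

lemma max_ext:
  fixes W :: "(real \<times> real) set"
  assumes W: "compact W" and ab: "a \<noteq> b" "closed_segment a b \<subseteq> W"
  shows "\<exists>c d. c \<noteq> d \<and> closed_segment a b \<subseteq> closed_segment c d \<and> closed_segment c d \<subseteq> W \<and>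
     (\<forall>c' d'. closed_segment c d \<subseteq> closed_segment c' d' \<and> closed_segment c' d' \<subseteq> W \<longrightarrow>
         closed_segment c' d' = closed_segment c d)"
proof -
  define K where "K = (W \<times> W) \<inter> {z. dist (fst z) (snd z) = dist (fst z) a + dist a (snd z)}
     \<inter> {z. dist (fst z) (snd z) = dist (fst z) b + dist b (snd z)}
     \<inter> (\<Inter>u\<in>{0..1::real}. (\<lambda>z. (1 - u) *\<^sub>R fst z + u *\<^sub>R snd z) -` W)"
  have Kiff: "z \<in> K \<longleftrightarrow> a \<in> closed_segment (fst z) (snd z) \<and> b \<in> closed_segment (fst z) (snd z)
       \<and> closed_segment (fst z) (snd z) \<subseteq> W" for z
  proof -
    have "closed_segment (fst z) (snd z) \<subseteq> W \<longleftrightarrow> (\<forall>u\<in>{0..1::real}. (1 - u) *\<^sub>R fst z + u *\<^sub>R snd z \<in> W)"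
      proof
      assume h: "closed_segment (fst z) (snd z) \<subseteq> W"
      show "\<forall>u\<in>{0..1::real}. (1 - u) *\<^sub>R fst z + u *\<^sub>R snd z \<in> W"
      proof
        fix u :: real assume "u \<in> {0..1}"
        then have "(1 - u) *\<^sub>R fst z + u *\<^sub>R snd z \<in> closed_segment (fst z) (snd z)"
          by (auto simp: in_segment)
        then show "(1 - u) *\<^sub>R fst z + u *\<^sub>R snd z \<in> W" using h by blast
      qed
    qed (auto simp: in_segment)
    moreover have "x \<in> closed_segment (fst z) (snd z) \<longleftrightarrow> dist (fst z) (snd z) = dist (fst z) x + dist x (snd z)" for x
      using between[of "fst z" "snd z" x] between_mem_segment[of "fst z" "snd z" x] by simp
    moreover have "closed_segment (fst z) (snd z) \<subseteq> W \<Longrightarrow> z \<in> W \<times> W"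
      by (cases z) (auto simp: subset_iff)
    ultimately show ?thesis unfolding K_def by auto
  qed
  have cW: "closed W" using W compact_imp_closed by blast
  have "closed K" unfolding K_def
    apply (intro closed_Int closed_Times cW closed_INT ballI closed_Collect_eq continuous_closed_vimage)
    by (auto intro!: continuous_intros)
  moreover have "bounded (W \<times> W)" using W by (simp add: bounded_Times compact_imp_bounded)
  then have "bounded K" unfolding K_def by (rule bounded_subset) auto
  ultimately have cK: "compact K" using compact_eq_bounded_closed by blast
  have "(a, b) \<in> K" using ab by (simp add: Kiff)
  moreover have "continuous_on K (\<lambda>z. dist (fst z) (snd z))" by (intro continuous_intros)
  ultimately have "\<exists>z\<in>K. \<forall>y\<in>K. dist (fst y) (snd y) \<le> dist (fst z) (snd z)"
    using continuous_attains_sup[OF cK, of "\<lambda>z. dist (fst z) (snd z)"] by blast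
  then obtain z where z: "z \<in> K" and zmax: "\<forall>y\<in>K. dist (fst y) (snd y) \<le> dist (fst z) (snd z)"
    by blast
  obtain c d where zcd: "z = (c, d)" by (cases z)
  have sub: "closed_segment a b \<subseteq> closed_segment c d"
    using z zcd Kiff by (simp add: closed_segment_subset)
  have "c \<noteq> d"
  proof
    assume "c = d"
    then have "a \<in> {c}" "b \<in> {c}" using sub ends_in_segment[of a b] by auto
    then show False using ab by simp
  qed
  moreover have "closed_segment c d \<subseteq> W" using z zcd Kiff by simp
  moreover have "closed_segment c' d' = closed_segment c d"
    if h: "closed_segment c d \<subseteq> closed_segment c' d'" "closed_segment c' d' \<subseteq> W" for c' d'
  proof -
    have "(c', d') \<in> K" using h sub by (auto simp: Kiff)
    then have "dist c' d' \<le> dist c d" using zmax zcd by fastforce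
    moreover have "c \<in> closed_segment c' d'" "d \<in> closed_segment c' d'" using h by auto
    ultimately show ?thesis using seg_sub_eq by metis
  qed
  ultimately show ?thesis using sub by blast
qed

lemma path_points_Cons2:
  "path_points (a # b # rest) = closed_segment a b \<union> path_points (b # rest)"
proof -
  have "(\<Union>i<length (a # b # rest) - 1. closed_segment ((a # b # rest) ! i) ((a # b # rest) ! (i + 1)))
      = closed_segment a b \<union> (\<Union>i<length (b # rest) - 1. closed_segment ((b # rest) ! i) ((b # rest) ! (i + 1)))"
    by (simp add: lessThan_Suc_eq_insert_0 del: lessThan_Suc)
  then show ?thesis unfolding path_points_def by auto
qed

lemma connected_path_points: "ps \<noteq> [] \<Longrightarrow> connected (path_points ps)"
proof (induction ps)
  case Nil then show ?case by simp
next
  case (Cons a rest)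
  show ?case
  proof (cases rest)
    case Nil
    then show ?thesis by (simp add: path_points_def)
  next
    case (Cons b r)
    have "connected (path_points rest)" using Cons Cons.IH by simp
    moreover have "b \<in> path_points rest" using Cons by (simp add: path_points_def)
    ultimately show ?thesis using Cons path_points_Cons2[of a b r]
      by (metis connected_Un connected_segment disjoint_iff ends_in_segment(2))
  qed
qed

lemma hd_in_path_points: "ps \<noteq> [] \<Longrightarrow> hd ps \<in> path_points ps"
  by (cases ps) (auto simp: path_points_def)

lemma region_facts:
  fixes vs :: "pt list"
  defines "B \<equiv> poly_boundary vs"
  shows "compact (poly_region vs)" "frontier (interior (poly_region vs)) \<subseteq> B"
    "B \<subseteq> poly_region vs"
proof -
  have cB: "compact B" unfolding B_def poly_boundary_def poly_edge_def
    by (intro compact_UN) auto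
  then have clB: "closed B" by (rule compact_imp_closed)
  have reg: "poly_region vs = B \<union> inside B" unfolding B_def poly_region_def by simp
  have cl: "closed (poly_region vs)" unfolding reg union_with_inside
    using open_outside[OF clB] by (simp add: closed_def)
  have "bounded (poly_region vs)" unfolding reg
    using cB by (simp add: bounded_Un bounded_inside compact_imp_bounded)
  then show "compact (poly_region vs)" using cl compact_eq_bounded_closed by blast
  have "inside B \<subseteq> interior (poly_region vs)"
    using open_inside[OF clB] unfolding reg by (intro interior_maximal) auto
  moreover have "closure (interior (poly_region vs)) \<subseteq> poly_region vs"
    by (rule closure_minimal[OF interior_subset cl])
  ultimately show "frontier (interior (poly_region vs)) \<subseteq> B"
    unfolding frontier_def reg by auto
  show "B \<subseteq> poly_region vs" unfolding reg by auto
qed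

lemma edges_skeleton:
  assumes "simple_polygon vs"
  shows "skeleton (poly_region vs) (poly_edge vs ` {..<length vs})"
  unfolding skeleton_def
proof (intro conjI allI impI ballI)
  let ?n = "length vs"
  have n3: "?n \<ge> 3" and dist: "distinct vs" using assms by (auto simp: simple_polygon_def)
  fix s assume "s \<in> poly_edge vs ` {..<?n}"
  then obtain i where i: "i < ?n" "s = poly_edge vs i" by auto
  have "(i + 1) mod ?n < ?n" using n3 by (intro mod_less_divisor) auto
  moreover have "(i + 1) mod ?n \<noteq> i"
  proof (cases "i + 1 < ?n")
    case True then show ?thesis by simp
  next
    case False
    then have "i + 1 = ?n" using i by simp
    then show ?thesis using n3 by simp
  qed
  ultimately have "vs ! i \<noteq> vs ! ((i + 1) mod ?n)" using dist i by (simp add: nth_eq_iff_index_eq)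
  then show "is_segment s" using i unfolding is_segment_def poly_edge_def by blast
next
  show "\<Union> (poly_edge vs ` {..<length vs}) \<subseteq> poly_region vs"
    using region_facts(3)[of vs] by (simp add: poly_boundary_def)
next
  fix p q ps
  assume h: "p \<notin> interior (poly_region vs) \<and> q \<notin> interior (poly_region vs) \<and>
        (\<forall>ps. shortest_rect_path ps p q \<and> card (corner_points ps) \<le> 1 \<longrightarrow>
              path_points ps \<inter> interior (poly_region vs) \<noteq> {})"
    and ps: "shortest_rect_path ps p q \<and> card (corner_points ps) \<le> 1"
  have ne: "ps \<noteq> []" and hd: "hd ps = p" using ps
    by (auto simp: shortest_rect_path_def rect_path_between_def rect_path_def)
  have "path_points ps \<inter> frontier (interior (poly_region vs)) \<noteq> {}"
  proof (rule connected_Int_frontier)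
    show "connected (path_points ps)" using ne by (rule connected_path_points)
    show "path_points ps \<inter> interior (poly_region vs) \<noteq> {}" using h ps by blast
    show "path_points ps - interior (poly_region vs) \<noteq> {}"
      using hd_in_path_points[OF ne] hd h by blast
  qed
  then have "path_points ps \<inter> poly_boundary vs \<noteq> {}" using region_facts(2)[of vs] by blast
  then show "\<exists>s\<in>poly_edge vs ` {..<length vs}. path_points ps \<inter> s \<noteq> {}"
    unfolding poly_boundary_def by blast
qed

lemma skeleton_mono:
  assumes "skeleton W S" "\<forall>s\<in>S. s \<subseteq> g s" "\<forall>s\<in>S. is_segment (g s) \<and> g s \<subseteq> W"
  shows "skeleton W (g ` S)"
  unfolding skeleton_def
proof (intro conjI allI impI ballI)
  fix t assume "t \<in> g ` S"
  then show "is_segment t" using assms(3) by blast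
next
  show "\<Union> (g ` S) \<subseteq> W" using assms(3) by blast
next
  fix p q ps
  assume h: "p \<notin> interior W \<and> q \<notin> interior W \<and>
        (\<forall>ps. shortest_rect_path ps p q \<and> card (corner_points ps) \<le> 1 \<longrightarrow>
              path_points ps \<inter> interior W \<noteq> {})"
    and ps: "shortest_rect_path ps p q \<and> card (corner_points ps) \<le> 1"
  have H: "\<forall>p q. p \<notin> interior W \<and> q \<notin> interior W \<and>
        (\<forall>ps. shortest_rect_path ps p q \<and> card (corner_points ps) \<le> 1 \<longrightarrow>
              path_points ps \<inter> interior W \<noteq> {}) \<longrightarrow>
        (\<forall>ps. shortest_rect_path ps p q \<and> card (corner_points ps) \<le> 1 \<longrightarrow>
              (\<exists>s\<in>S. path_points ps \<inter> s \<noteq> {}))"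
    using assms(1) unfolding skeleton_def by (rule conjunct2[OF conjunct2])
  have "\<exists>s\<in>S. path_points ps \<inter> s \<noteq> {}"
    using mp[OF spec[OF spec[OF H, of p], of q] h, THEN spec[of _ ps]] ps by (rule mp)
  then obtain s where "s \<in> S" "path_points ps \<inter> s \<noteq> {}" by blast
  then have "g s \<in> g ` S" "path_points ps \<inter> g s \<noteq> {}" using assms(2) by auto
  then show "\<exists>s\<in>g ` S. path_points ps \<inter> s \<noteq> {}" by blast
qed

theorem lemma1:
  fixes vs :: "pt list"
  assumes "obstacle vs"
    and "rectilinear_polygon vs"
    and "rectilinearly_convex (poly_region vs)"
  shows "\<exists>S. minimum_skeleton (poly_region vs) S \<and>
           (\<forall>s\<in>S. max_visibility_edge (poly_region vs) s)"
proof -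
  let ?W = "poly_region vs"
  have sp: "simple_polygon vs" using assms(1) by (simp add: obstacle_def)
  define P where "P n \<longleftrightarrow> (\<exists>T. finite T \<and> skeleton ?W T \<and> card T = n)" for n
  have "P (card (poly_edge vs ` {..<length vs}))"
    unfolding P_def using edges_skeleton[OF sp] by blast
  then have "P (LEAST n. P n)" by (rule LeastI)
  then obtain S where S: "finite S" "skeleton ?W S" "card S = (LEAST n. P n)"
    unfolding P_def by blast
  have Smin: "card S \<le> card T" if "finite T" "skeleton ?W T" for T
    using that S(3) by (metis (mono_tags, lifting) P_def Least_le)
  have ext: "\<exists>t. s \<subseteq> t \<and> max_visibility_edge ?W t" if "s \<in> S" for s
  proof -
    have sk12: "\<forall>s\<in>S. is_segment s" "\<Union>S \<subseteq> ?W"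
      using S(2) unfolding skeleton_def by (rule conjunct1, rule conjunct1[OF conjunct2])
    have "is_segment s" using sk12(1) that by blast
    then obtain a b where ab: "a \<noteq> b" "s = closed_segment a b"
      unfolding is_segment_def by blast
    have "s \<subseteq> ?W" using sk12(2) that by blast
    then have abW: "closed_segment a b \<subseteq> ?W" using ab(2) by simp
    obtain c d where cd: "c \<noteq> d" "closed_segment a b \<subseteq> closed_segment c d"
      "closed_segment c d \<subseteq> ?W"
      "\<forall>c' d'. closed_segment c d \<subseteq> closed_segment c' d' \<and> closed_segment c' d' \<subseteq> ?W \<longrightarrow>
         closed_segment c' d' = closed_segment c d"
      using max_ext[OF region_facts(1)[of vs] ab(1) abW] by blast
    have "is_segment (closed_segment c d)" unfolding is_segment_def using cd(1) by blast
    then have "max_visibility_edge ?W (closed_segment c d)"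
      unfolding max_visibility_edge_def using cd(3,4) by simp
    then show ?thesis using cd(2) ab(2) by blast
  qed
  define g where "g s = (SOME t. s \<subseteq> t \<and> max_visibility_edge ?W t)" for s
  have g: "s \<subseteq> g s \<and> max_visibility_edge ?W (g s)" if "s \<in> S" for s
    unfolding g_def using someI_ex[OF ext[OF that]] .
  have sk: "skeleton ?W (g ` S)"
    by (rule skeleton_mono[OF S(2)]) (use g in \<open>auto simp: max_visibility_edge_def\<close>)
  have "minimum_skeleton ?W (g ` S)"
    unfolding minimum_skeleton_def
  proof (intro conjI allI impI)
    show "finite (g ` S)" using S(1) by simp
    show "skeleton ?W (g ` S)" by (rule sk)
    fix T assume "finite T \<and> skeleton ?W T"
    then show "card (g ` S) \<le> card T" using Smin card_image_le[OF S(1), of g] by fastforce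
  qed
  moreover have "\<forall>s\<in>g ` S. max_visibility_edge ?W s" using g by blast
  ultimately show ?thesis by blast
qed

end
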